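(* Let $G\in\mathcal{C}$, let $H$ be a hole of $G$, and let $u,v\in V(G)\setminus V(H)$ each be either a major vertex or a clone for $H$. Suppose $u$ and $v$ are nested with respect to $H$ and $uv\in E(G)$. Then $u$ and $v$ have a common neighbor in $H$.
   Context: All graphs are finite and simple; paths are induced paths; a hole is an induced cycle of length at least four. $\mathcal{C}$ is the class of graphs containing no theta, pyramid, prism or turtle as an induced subgraph, where: a theta consists of two nonadjacent vertices $a,b$ and three paths from $a$ to $b$, otherwise vertex-disjoint, any two of which induce a hole; a pyramid consists of a vertex $a$, a triangle $\{b_1,b_2,b_3\}$ and paths $P_i$ from $a$ to $b_i$, pairwise disjoint except at $a$, any two of which induce a hole; a prism consists of two disjoint triangles $\{a_1,a_2,a_3\},\{b_1,b_2,b_3\}$ and pairwise disjoint paths $P_i$ from $a_i$ to $b_i$, any two of which induce a hole; a turtle consists of disjoint paths $P_1$ (from $a_1$ to $b_1$), $P_2$ (from $a_2$ to $b_2$) with $a_1a_2,b_1b_2$ edges and $V(P_1)\cup V(P_2)$ inducing a hole, plus adjacent vertices $x,y$ where $x$ has at least three neighbors in $P_1$ and none in $P_2$, and $y$ has at least three neighbors in $P_2$ and none in $P_1$. For a hole $H$ and $u\notin V(H)$, $N_H(u)$ is the set of neighbors of $u$ in $H$. A vertex $u\notin V(H)$ is minor for $H$ if $N_H(u)\neq\emptyset$ and $N_H(u)$ is contained in the vertex set of some three-vertex subpath of $H$; it is major for $H$ if $N_H(u)\ne\emptyset$ and $u$ is not minor. A vertex $u\notin V(H)$ is a clone of $y\in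 V(H)$ if $N_H(u)=\{x,y,z\}$ where $x\text{-}y\text{-}z$ is a subpath of $H$. Two vertices $u,v\notin V(H)$ are nested with respect to $H$ if there exist distinct $a,b\in V(H)$ such that one of the two $a$–$b$ paths of $H$ contains all neighbors of $u$ in $H$ and the other contains all neighbors of $v$ in $H$. *)

theory Defs
  imports Main
begin

definition graph :: "'a set \<Rightarrow> ('a \<Rightarrow> 'a \<Rightarrow> bool) \<Rightarrow> bool" where
  "graph V E \<longleftrightarrow> finite V \<and> (\<forall>x y. E x y \<longrightarrow> E y x) \<and> (\<forall>x. \<not> E x x)
     \<and> (\<forall>x y. E x y \<longrightarrow> x \<in> V \<and> y \<in> V)"

definition is_path :: "'a set \<Rightarrow> ('a \<Rightarrow> 'a \<Rightarrow> bool) \<Rightarrow> 'a list \<Rightarrow> 'a \<Rightarrow> 'a \<Rightarrow> bool" where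
  "is_path V E P a b \<longleftrightarrow> P \<noteq> [] \<and> hd P = a \<and> last P = b \<and> distinct P \<and> set P \<subseteq> V \<and>
     (\<forall>i<length P. \<forall>j<length P. E (P!i) (P!j) \<longleftrightarrow> (j = i + 1 \<or> i = j + 1))"

definition is_hole :: "'a set \<Rightarrow> ('a \<Rightarrow> 'a \<Rightarrow> bool) \<Rightarrow> 'a list \<Rightarrow> bool" where
  "is_hole V E C \<longleftrightarrow> length C \<ge> 4 \<and> distinct C \<and> set C \<subseteq> V \<and>
     (\<forall>i<length C. \<forall>j<length C.
        E (C!i) (C!j) \<longleftrightarrow> (j = Suc i mod length C \<or> i = Suc j mod length C))"

definition induces_hole :: "'a set \<Rightarrow> ('a \<Rightarrow> 'a \<Rightarrow> bool) \<Rightarrow> 'a set \<Rightarrow> bool" where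
  "induces_hole V E S \<longleftrightarrow> (\<exists>C. is_hole V E C \<and> set C = S)"

definition has_theta :: "'a set \<Rightarrow> ('a \<Rightarrow> 'a \<Rightarrow> bool) \<Rightarrow> bool" where
  "has_theta V E \<longleftrightarrow> (\<exists>a b P1 P2 P3. a \<in> V \<and> b \<in> V \<and> a \<noteq> b \<and> \<not> E a b \<and>
     is_path V E P1 a b \<and> is_path V E P2 a b \<and> is_path V E P3 a b \<and>
     set P1 \<inter> set P2 = {a, b} \<and> set P1 \<inter> set P3 = {a, b} \<and> set P2 \<inter> set P3 = {a, b} \<and>
     induces_hole V E (set P1 \<union> set P2) \<and> induces_hole V E (set P1 \<union> set P3) \<and>
     induces_hole V E (set P2 \<union> set P3))"

definition has_pyramid :: "'a set \<Rightarrow> ('a \<Rightarrow> 'a \<Rightarrow> bool) \<Rightarrow> bool" where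
  "has_pyramid V E \<longleftrightarrow> (\<exists>a b1 b2 b3 P1 P2 P3.
     b1 \<noteq> b2 \<and> b1 \<noteq> b3 \<and> b2 \<noteq> b3 \<and> E b1 b2 \<and> E b1 b3 \<and> E b2 b3 \<and>
     is_path V E P1 a b1 \<and> is_path V E P2 a b2 \<and> is_path V E P3 a b3 \<and>
     set P1 \<inter> set P2 = {a} \<and> set P1 \<inter> set P3 = {a} \<and> set P2 \<inter> set P3 = {a} \<and>
     induces_hole V E (set P1 \<union> set P2) \<and> induces_hole V E (set P1 \<union> set P3) \<and>
     induces_hole V E (set P2 \<union> set P3))"

definition has_prism :: "'a set \<Rightarrow> ('a \<Rightarrow> 'a \<Rightarrow> bool) \<Rightarrow> bool" where
  "has_prism V E \<longleftrightarrow> (\<exists>a1 a2 a3 b1 b2 b3 P1 P2 P3.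
     a1 \<noteq> a2 \<and> a1 \<noteq> a3 \<and> a2 \<noteq> a3 \<and> E a1 a2 \<and> E a1 a3 \<and> E a2 a3 \<and>
     b1 \<noteq> b2 \<and> b1 \<noteq> b3 \<and> b2 \<noteq> b3 \<and> E b1 b2 \<and> E b1 b3 \<and> E b2 b3 \<and>
     {a1, a2, a3} \<inter> {b1, b2, b3} = {} \<and>
     is_path V E P1 a1 b1 \<and> is_path V E P2 a2 b2 \<and> is_path V E P3 a3 b3 \<and>
     set P1 \<inter> set P2 = {} \<and> set P1 \<inter> set P3 = {} \<and> set P2 \<inter> set P3 = {} \<and>
     induces_hole V E (set P1 \<union> set P2) \<and> induces_hole V E (set P1 \<union> set P3) \<and>
     induces_hole V E (set P2 \<union> set P3))"

definition has_turtle :: "'a set \<Rightarrow> ('a \<Rightarrow> 'a \<Rightarrow> bool) \<Rightarrow> bool" where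
  "has_turtle V E \<longleftrightarrow> (\<exists>a1 b1 a2 b2 P1 P2 x y.
     is_path V E P1 a1 b1 \<and> is_path V E P2 a2 b2 \<and> set P1 \<inter> set P2 = {} \<and>
     E a1 a2 \<and> E b1 b2 \<and> induces_hole V E (set P1 \<union> set P2) \<and>
     x \<in> V \<and> y \<in> V \<and> x \<notin> set P1 \<union> set P2 \<and> y \<notin> set P1 \<union> set P2 \<and> E x y \<and>
     card {w \<in> set P1. E x w} \<ge> 3 \<and> (\<forall>w \<in> set P2. \<not> E x w) \<and>
     card {w \<in> set P2. E y w} \<ge> 3 \<and> (\<forall>w \<in> set P1. \<not> E y w))"

definition in_class_C :: "'a set \<Rightarrow> ('a \<Rightarrow> 'a \<Rightarrow> bool) \<Rightarrow> bool" where
  "in_class_C V E \<longleftrightarrow> \<not> has_theta V E \<and> \<not> has_pyramid V E \<and> \<not> has_prism V E \<and> \<not> has_turtle V E"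

definition nbrs_H :: "('a \<Rightarrow> 'a \<Rightarrow> bool) \<Rightarrow> 'a list \<Rightarrow> 'a \<Rightarrow> 'a set" where
  "nbrs_H E H u = {w \<in> set H. E u w}"

definition three_path :: "'a list \<Rightarrow> nat \<Rightarrow> 'a set" where
  "three_path H i = {H ! (i mod length H), H ! (Suc i mod length H), H ! (Suc (Suc i) mod length H)}"

definition minor :: "('a \<Rightarrow> 'a \<Rightarrow> bool) \<Rightarrow> 'a list \<Rightarrow> 'a \<Rightarrow> bool" where
  "minor E H u \<longleftrightarrow> u \<notin> set H \<and> nbrs_H E H u \<noteq> {} \<and>
     (\<exists>i<length H. nbrs_H E H u \<subseteq> three_path H i)"

definition major :: "('a \<Rightarrow> 'a \<Rightarrow> bool) \<Rightarrow> 'a list \<Rightarrow> 'a \<Rightarrow> bool" where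
  "major E H u \<longleftrightarrow> u \<notin> set H \<and> nbrs_H E H u \<noteq> {} \<and> \<not> minor E H u"

definition clone_of :: "('a \<Rightarrow> 'a \<Rightarrow> bool) \<Rightarrow> 'a list \<Rightarrow> 'a \<Rightarrow> 'a \<Rightarrow> bool" where
  "clone_of E H u y \<longleftrightarrow> u \<notin> set H \<and>
     (\<exists>i<length H. y = H ! (Suc i mod length H) \<and> nbrs_H E H u = three_path H i)"

definition is_clone :: "('a \<Rightarrow> 'a \<Rightarrow> bool) \<Rightarrow> 'a list \<Rightarrow> 'a \<Rightarrow> bool" where
  "is_clone E H u \<longleftrightarrow> (\<exists>y \<in> set H. clone_of E H u y)"

text \<open>Vertex set of the path of H going forward from index i to index j.\<close>
definition arc :: "'a list \<Rightarrow> nat \<Rightarrow> nat \<Rightarrow> 'a set" where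
  "arc H i j = {H ! ((i + k) mod length H) | k. k \<le> (j + length H - i) mod length H}"

definition nested :: "('a \<Rightarrow> 'a \<Rightarrow> bool) \<Rightarrow> 'a list \<Rightarrow> 'a \<Rightarrow> 'a \<Rightarrow> bool" where
  "nested E H u v \<longleftrightarrow> u \<notin> set H \<and> v \<notin> set H \<and>
     (\<exists>i<length H. \<exists>j<length H. i \<noteq> j \<and>
        nbrs_H E H u \<subseteq> arc H i j \<and> nbrs_H E H v \<subseteq> arc H j i)"

end

theory Submission
  imports Defs
begin


lemma mod2n: "a < 2*n \<Longrightarrow> a mod n = (if a < n then a else a - (n::nat))"
  by (simp add: mod_if)
lemma modrot:
  assumes "i < n" "j < (n::nat)"
  shows "((j+r) mod n = Suc ((i+r) mod n) mod n) = (j = Suc i mod n)"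
proof -
  define s where "s = r mod n"
  have s: "s < n" using assms s_def by simp
  have 1: "(j+r) mod n = (j+s) mod n" unfolding s_def by (simp add: mod_add_right_eq)
  have 2: "(i+r) mod n = (i+s) mod n" unfolding s_def by (simp add: mod_add_right_eq)
  show ?thesis unfolding 1 2 using assms s
    by (auto simp: mod2n split: if_splits)
qed
lemma hole_rotate:
  assumes "is_hole V E C"
  shows "is_hole V E (rotate r C)"
proof -
  let ?n = "length C"
  have "\<forall>i<?n. \<forall>j<?n. E (rotate r C ! i) (rotate r C ! j) \<longleftrightarrow> (j = Suc i mod ?n \<or> i = Suc j mod ?n)"
  proof (intro allI impI)
    fix i j assume ij: "i < ?n" "j < ?n"
    have pos: "?n > 0" using ij by (cases C) auto
    have "E (rotate r C ! i) (rotate r C ! j) = E (C ! ((r+i) mod ?n)) (C ! ((r+j) mod ?n))"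
      using ij pos by (simp add: nth_rotate)
    also have "\<dots> = E (C ! ((i+r) mod ?n)) (C ! ((j+r) mod ?n))" by (simp only: add.commute)
    also have "\<dots> = ((j+r) mod ?n = Suc ((i+r) mod ?n) mod ?n \<or> (i+r) mod ?n = Suc ((j+r) mod ?n) mod ?n)"
      using assms pos unfolding is_hole_def by simp
    also have "\<dots> = (j = Suc i mod ?n \<or> i = Suc j mod ?n)" using modrot ij by simp
    finally show "E (rotate r C ! i) (rotate r C ! j) \<longleftrightarrow> (j = Suc i mod ?n \<or> i = Suc j mod ?n)" .
  qed
  then show ?thesis using assms unfolding is_hole_def by simp
qed

lemma hole_take_path:
  assumes "is_hole V E C" "0 < k" "k < length C"
  shows "is_path V E (take k C) (C!0) (C!(k-1))"
proof -
  let ?n = "length C"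
  have "\<forall>i<k. \<forall>j<k. E (take k C ! i) (take k C ! j) \<longleftrightarrow> (j = i + 1 \<or> i = j + 1)"
  proof (intro allI impI)
    fix i j assume ij: "i < k" "j < k"
    have "E (take k C ! i) (take k C ! j) = E (C!i) (C!j)" using ij by simp
    also have "\<dots> = (j = Suc i mod ?n \<or> i = Suc j mod ?n)" using assms ij unfolding is_hole_def by simp
    also have "\<dots> = (j = i + 1 \<or> i = j + 1)" using ij assms(3) by auto
    finally show "E (take k C ! i) (take k C ! j) \<longleftrightarrow> (j = i + 1 \<or> i = j + 1)" .
  qed
  then show ?thesis
  proof -
    have ne: "C \<noteq> []" "take k C \<noteq> []" using assms by auto
    have lk: "last (take k C) = C!(k-1)" using ne assms by (simp add: last_conv_nth)
    show ?thesis using lk assms ne \<open>\<forall>i<k. _\<close> unfolding is_hole_def is_path_def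
      by (auto simp: hd_conv_nth min_def dest: in_set_takeD)
  qed
qed

lemma path_rev:
  assumes "is_path V E P a b"
  shows "is_path V E (rev P) b a"
proof -
  let ?m = "length P"
  have "\<forall>i<?m. \<forall>j<?m. E (rev P ! i) (rev P ! j) \<longleftrightarrow> (j = i + 1 \<or> i = j + 1)"
  proof (intro allI impI)
    fix i j assume ij: "i < ?m" "j < ?m"
    have "E (rev P ! i) (rev P ! j) = E (P ! (?m - Suc i)) (P ! (?m - Suc j))" using ij by (simp add: rev_nth)
    also have "\<dots> = (?m - Suc j = ?m - Suc i + 1 \<or> ?m - Suc i = ?m - Suc j + 1)"
      using assms ij unfolding is_path_def by simp
    also have "\<dots> = (j = i + 1 \<or> i = j + 1)" using ij by auto
    finally show "E (rev P ! i) (rev P ! j) \<longleftrightarrow> (j = i + 1 \<or> i = j + 1)" .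
  qed
  then show ?thesis using assms unfolding is_path_def by (simp add: hd_rev last_rev)
qed

lemma sucmod: "i < Suc m \<Longrightarrow> Suc i mod Suc m = (if i = m then 0 else Suc i)"
  by (auto simp: mod_if)

lemma cyc: "m \<ge> 3 \<Longrightarrow> i < Suc m \<Longrightarrow> j < Suc m \<Longrightarrow> (j = Suc i mod Suc m \<or> i = Suc j mod Suc m) = (if i = 0 then (j = 1 \<or> j = m) else if j = 0 then (i = 1 \<or> i = m) else (j = i + 1 \<or> i = j + 1))"
  by (simp add: sucmod)

lemma path_add_hole:
  assumes g: "graph V E" and p: "is_path V E P a b" and l: "length P \<ge> 3" and w: "w \<in> V" "w \<notin> set P"
    and nb: "\<forall>t<length P. E w (P!t) \<longleftrightarrow> t = 0 \<or> t = length P - 1"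
  shows "is_hole V E (w # P)"
proof -
  let ?m = "length P"
  have sym: "\<And>x y. E x y = E y x" using g unfolding graph_def by blast
  have irr: "\<And>x. \<not> E x x" using g unfolding graph_def by blast
  have adj: "\<forall>i<?m. \<forall>j<?m. E (P!i) (P!j) \<longleftrightarrow> (j = i + 1 \<or> i = j + 1)" using p unfolding is_path_def by blast
  have "\<forall>i<Suc ?m. \<forall>j<Suc ?m. E ((w#P)!i) ((w#P)!j) \<longleftrightarrow> (j = Suc i mod Suc ?m \<or> i = Suc j mod Suc ?m)"
  proof (intro allI impI)
    fix i j assume ij: "i < Suc ?m" "j < Suc ?m"
    have c: "(j = Suc i mod Suc ?m \<or> i = Suc j mod Suc ?m) = (if i = 0 then (j = 1 \<or> j = ?m) else if j = 0 then (i = 1 \<or> i = ?m) else (j = i + 1 \<or> i = j + 1))"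
      using cyc[OF l ij] .
    show "E ((w#P)!i) ((w#P)!j) \<longleftrightarrow> (j = Suc i mod Suc ?m \<or> i = Suc j mod Suc ?m)"
      unfolding c
    proof (cases i)
      case 0
      then show "E ((w#P)!i) ((w#P)!j) = (if i = 0 then (j = 1 \<or> j = ?m) else if j = 0 then (i = 1 \<or> i = ?m) else (j = i + 1 \<or> i = j + 1))"
      proof (cases j)
        case 0 then show ?thesis using \<open>i=0\<close> irr l by (cases P) auto
      next
        case (Suc j')
        have "E ((w#P)!i) ((w#P)!j) = (j' = 0 \<or> j' = ?m - 1)" using nb Suc \<open>i=0\<close> ij by simp
        then show ?thesis using Suc \<open>i=0\<close> ij l by auto
      qed
    next
      case (Suc i')
      then show "E ((w#P)!i) ((w#P)!j) = (if i = 0 then (j = 1 \<or> j = ?m) else if j = 0 then (i = 1 \<or> i = ?m) else (j = i + 1 \<or> i = j + 1))"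
      proof (cases j)
        case 0
        have "E ((w#P)!i) ((w#P)!j) = (i' = 0 \<or> i' = ?m - 1)" using nb Suc \<open>j=0\<close> ij sym by simp
        then show ?thesis using Suc \<open>j=0\<close> ij l by auto
      next
        case (Suc j')
        have "E ((w#P)!i) ((w#P)!j) = (j' = i' + 1 \<or> i' = j' + 1)" using adj Suc \<open>i = Suc i'\<close> ij by simp
        then show ?thesis using Suc \<open>i = Suc i'\<close> by simp
      qed
    qed
  qed
  moreover have "distinct (w#P)" "set (w#P) \<subseteq> V" "length (w#P) \<ge> 4" using p w l unfolding is_path_def by auto
  ultimately show ?thesis unfolding is_hole_def by (metis length_Cons)
qed



lemma path3:
  assumes g: "graph V E" and "x \<in> V" "y \<in> V" "u \<in> V" "x \<noteq> y" "u \<noteq> x" "u \<noteq> y"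
    "E x u" "E u y" "\<not> E x y"
  shows "is_path V E [x,u,y] x y"
proof -
  have sym: "\<And>a b. E a b = E b a" using g unfolding graph_def by blast
  have irr: "\<And>a. \<not> E a a" using g unfolding graph_def by blast
  show ?thesis using assms sym irr unfolding is_path_def
    by (auto simp: less_Suc_eq nth_Cons')
qed

lemma nth_rot0: "C \<noteq> [] \<Longrightarrow> s < length C \<Longrightarrow> rotate s C ! 0 = C ! s"
  by (simp add: nth_rotate)

lemma theta_two:
  assumes g: "graph V E" and h: "is_hole V E H" and u: "u \<in> V" "u \<notin> set H"
    and nb: "nbrs_H E H u = {x,y}" and xy: "x \<noteq> y" "\<not> E x y"
  shows "has_theta V E"
proof -
  let ?n = "length H"
  have sym: "\<And>a b. E a b = E b a" using g unfolding graph_def by blast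
  have n4: "?n \<ge> 4" using h unfolding is_hole_def by simp
  have xH: "x \<in> set H" "y \<in> set H" using nb unfolding nbrs_H_def by auto
  have Exu: "E u x" "E u y" using nb unfolding nbrs_H_def by auto
  obtain s where s: "s < ?n" "x = H!s" using xH by (metis in_set_conv_nth)
  define C where "C = rotate s H"
  have hC: "is_hole V E C" unfolding C_def by (rule hole_rotate[OF h])
  have lC: "length C = ?n" and sC: "set C = set H" and dC: "distinct C" using h unfolding C_def is_hole_def by auto
  have Hne: "H \<noteq> []" using n4 by auto
  have C0: "C!0 = x" unfolding C_def using s Hne by (simp add: nth_rot0)
  have VC: "set C \<subseteq> V" using hC unfolding is_hole_def by simp
  obtain m where m: "m < ?n" "y = C!m" using xH sC lC by (metis in_set_conv_nth)
  have adjC: "\<And>i j. i < ?n \<Longrightarrow> j < ?n \<Longrightarrow> E (C!i) (C!j) = (j = Suc i mod ?n \<or> i = Suc j mod ?n)"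
    using hC lC unfolding is_hole_def by simp
  have m0: "m \<noteq> 0" using m C0 xy by (metis)
  have e01: "E (C!0) (C!1)" using adjC[of 0 1] n4 Hne by simp
  have m1: "m \<noteq> 1" using e01 m C0 xy by metis
  have e0n: "E (C!0) (C!(?n - 1))" using adjC[of 0 "?n - 1"] n4 Hne by simp
  have mn: "m \<noteq> ?n - 1" using e0n m C0 xy by metis
  have mr: "2 \<le> m" "m \<le> ?n - 2" using m0 m1 mn m by auto
  have ceq: "\<And>i j. i < ?n \<Longrightarrow> j < ?n \<Longrightarrow> (C!i = C!j) = (i = j)" using dC lC by (simp add: nth_eq_iff_index_eq)
  have nbC: "\<And>t. t < ?n \<Longrightarrow> E u (C!t) = (t = 0 \<or> t = m)"
  proof -
    fix t assume t: "t < ?n"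
    have "C!t \<in> set H" using t lC sC by (metis nth_mem)
    then have "E u (C!t) = (C!t \<in> {x,y})" using nb unfolding nbrs_H_def by blast
    also have "\<dots> = (t = 0 \<or> t = m)" using C0 m ceq[of t 0] ceq[of t m] t n4 Hne by auto
    finally show "E u (C!t) = (t = 0 \<or> t = m)" .
  qed
  define P2 where "P2 = take (m+1) C"
  have pP2: "is_path V E P2 x y" unfolding P2_def using hole_take_path[OF hC, of "m+1"] mr lC C0 m by simp
  define P3' where "P3' = drop m C @ [C!0]"
  define D where "D = rotate m C"
  have hD: "is_hole V E D" unfolding D_def by (rule hole_rotate[OF hC])
  have tD: "take (?n - m + 1) D = P3'"
  proof -
    have "D = drop m C @ take m C" unfolding D_def using m lC by (simp add: rotate_drop_take)
    moreover have "take 1 (take m C) = [C!0]" using m0 m lC by (cases C) auto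
    ultimately show ?thesis unfolding P3'_def using lC m by simp
  qed
  have Cne: "C \<noteq> []" using lC n4 by auto
  have D0: "D!0 = y" unfolding D_def using m lC Cne by (simp add: nth_rot0)
  have Dl: "D!(?n - m) = x" unfolding D_def using m lC Cne C0 m0 by (simp add: nth_rotate)
  have pP3': "is_path V E P3' y x" using hole_take_path[OF hD, of "?n - m + 1"] mr lC D0 Dl tD
    unfolding D_def by simp
  define P3 where "P3 = rev P3'"
  have pP3: "is_path V E P3 x y" unfolding P3_def by (rule path_rev[OF pP3'])
  have pP1: "is_path V E [x,u,y] x y"
    by (rule path3[OF g]) (use xH u Exu xy sym h in \<open>auto simp: is_hole_def\<close>)
  have setP2: "set P2 = set (take m C) \<union> {y}" unfolding P2_def using m lC
    by (simp add: take_Suc_conv_app_nth)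
  have setP3: "set P3 = set (drop m C) \<union> {x}" unfolding P3_def P3'_def using C0 by auto
  have disj: "set (take m C) \<inter> set (drop m C) = {}" using dC by (simp add: set_take_disj_set_drop_if_distinct)
  have xt: "x \<in> set (take m C)" using C0 m0 m lC by (auto simp: in_set_conv_nth intro!: exI[of _ 0])
  have yd: "y \<in> set (drop m C)" using m lC by (auto simp: in_set_conv_nth intro!: exI[of _ 0])
  have uC: "u \<notin> set C" using u sC by simp
  have tdC: "set (take m C) \<union> set (drop m C) = set C" using set_append[of "take m C" "drop m C"] by simp
  have i12: "set [x,u,y] \<inter> set P2 = {x,y}" using setP2 xt uC tdC by auto
  have i13: "set [x,u,y] \<inter> set P3 = {x,y}" using setP3 yd uC tdC by auto
  have i23: "set P2 \<inter> set P3 = {x,y}" using setP2 setP3 xt yd disj by auto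
  have h23: "induces_hole V E (set P2 \<union> set P3)"
    unfolding induces_hole_def using hC setP2 setP3 tdC xt yd by auto
  have h12: "induces_hole V E (set [x,u,y] \<union> set P2)"
  proof -
    have lP2: "length P2 = m + 1" unfolding P2_def using m lC by simp
    have "is_hole V E (u # P2)"
    proof (rule path_add_hole[OF g pP2])
      show "3 \<le> length P2" using lP2 mr by simp
      show "u \<in> V" "u \<notin> set P2" using u uC unfolding P2_def by (auto dest: in_set_takeD)
      show "\<forall>t<length P2. E u (P2 ! t) = (t = 0 \<or> t = length P2 - 1)"
        using lP2 nbC m unfolding P2_def by auto
    qed
    moreover have "set (u # P2) = set [x,u,y] \<union> set P2" using setP2 xt by auto
    ultimately show ?thesis unfolding induces_hole_def by blast
  qed
  have h13: "induces_hole V E (set [x,u,y] \<union> set P3)"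
  proof -
    have lP3: "length P3' = ?n - m + 1" unfolding P3'_def using m lC by simp
    have "is_hole V E (u # P3')"
    proof (rule path_add_hole[OF g pP3'])
      show "3 \<le> length P3'" using lP3 mr by simp
      show "u \<in> V" "u \<notin> set P3'" using u uC C0 xH unfolding P3'_def by (auto dest: in_set_dropD)
      show "\<forall>t<length P3'. E u (P3' ! t) = (t = 0 \<or> t = length P3' - 1)"
      proof (intro allI impI)
        fix t assume t: "t < length P3'"
        show "E u (P3' ! t) = (t = 0 \<or> t = length P3' - 1)"
        proof (cases "t < ?n - m")
          case True
          then have "P3' ! t = C!(m+t)" unfolding P3'_def using m lC by (simp add: nth_append)
          then show ?thesis using nbC[of "m+t"] True lP3 m0 by auto
        next
          case False
          then have "t = ?n - m" using t lP3 by simp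
          then have "P3' ! t = C!0" unfolding P3'_def using m lC by (simp add: nth_append)
          then show ?thesis using nbC[of 0] \<open>t = ?n - m\<close> lP3 n4 Hne by auto
        qed
      qed
    qed
    moreover have "set (u # P3') = set [x,u,y] \<union> set P3" using setP3 yd unfolding P3_def P3'_def by auto
    ultimately show ?thesis unfolding induces_hole_def by blast
  qed
  have xV: "x \<in> V" "y \<in> V" using xH h unfolding is_hole_def by auto
  show ?thesis unfolding has_theta_def
  proof (intro exI conjI)
    show "x \<in> V" "y \<in> V" "x \<noteq> y" "\<not> E x y" by (fact xV xy)+
    show "is_path V E [x,u,y] x y" "is_path V E P2 x y" "is_path V E P3 x y" by (fact pP1 pP2 pP3)+
    show "set [x,u,y] \<inter> set P2 = {x, y}" "set [x,u,y] \<inter> set P3 = {x, y}" "set P2 \<inter> set P3 = {x, y}"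
      by (fact i12 i13 i23)+
    show "induces_hole V E (set [x,u,y] \<union> set P2)" "induces_hole V E (set [x,u,y] \<union> set P3)"
      "induces_hole V E (set P2 \<union> set P3)" by (fact h12 h13 h23)+
  qed
qed



lemma FA_ar: "t<n \<Longrightarrow> i<n \<Longrightarrow> j<(n::nat) \<Longrightarrow> k \<le> (j+n-i) mod n \<Longrightarrow> (t+i) mod n = (i+k) mod n \<Longrightarrow> t \<le> (j+n-i) mod n"
  by (auto simp: mod2n split: if_splits)
lemma FB_ar: "t<n \<Longrightarrow> i<n \<Longrightarrow> j<(n::nat) \<Longrightarrow> i\<noteq>j \<Longrightarrow> k \<le> (i+n-j) mod n \<Longrightarrow> (t+i) mod n = (j+k) mod n \<Longrightarrow> (j+n-i) mod n \<le> t \<or> t = 0"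
  by (auto simp: mod2n split: if_splits)
lemma d_ar: "i<n \<Longrightarrow> j<(n::nat) \<Longrightarrow> i\<noteq>j \<Longrightarrow> 1 \<le> (j+n-i) mod n \<and> (j+n-i) mod n < n"
  by (auto simp: mod2n split: if_splits)

lemma card3:
  assumes g: "graph V E" and nt: "\<not> has_theta V E" and h: "is_hole V E H"
    and u: "u \<in> V" "u \<notin> set H" and mc: "major E H u \<or> is_clone E H u"
  shows "card (nbrs_H E H u) \<ge> 3"
proof -
  let ?n = "length H"
  let ?N = "nbrs_H E H u"
  have n4: "?n \<ge> 4" using h unfolding is_hole_def by simp
  have dH: "distinct H" using h unfolding is_hole_def by simp
  have Hne: "H \<noteq> []" using n4 by auto
  have fin: "finite ?N" unfolding nbrs_H_def by simp
  have sub: "?N \<subseteq> set H" unfolding nbrs_H_def by auto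
  show ?thesis using mc
  proof
    assume cl: "is_clone E H u"
    then obtain i where i: "i < ?n" "?N = three_path H i" unfolding is_clone_def clone_of_def by blast
    have a: "i mod ?n = i" using i by simp
    have b: "Suc i mod ?n = (if Suc i < ?n then Suc i else 0)" using i n4 by (simp add: mod2n)
    have c: "Suc (Suc i) mod ?n = (if Suc (Suc i) < ?n then Suc (Suc i) else Suc (Suc i) - ?n)" using i n4 by (simp add: mod2n)
    have lt: "i mod ?n < ?n" "Suc i mod ?n < ?n" "Suc (Suc i) mod ?n < ?n" using Hne by simp_all
    have ne: "i mod ?n \<noteq> Suc i mod ?n" "i mod ?n \<noteq> Suc (Suc i) mod ?n" "Suc i mod ?n \<noteq> Suc (Suc i) mod ?n"
      unfolding a b c using i n4 by auto
    have "H ! (i mod ?n) \<noteq> H ! (Suc i mod ?n)" "H ! (i mod ?n) \<noteq> H ! (Suc (Suc i) mod ?n)"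
      "H ! (Suc i mod ?n) \<noteq> H ! (Suc (Suc i) mod ?n)"
      using ne lt dH by (simp_all add: nth_eq_iff_index_eq)
    then show ?thesis using i unfolding three_path_def by simp
  next
    assume mj: "major E H u"
    then have nem: "?N \<noteq> {}" and nmin: "\<not> minor E H u" unfolding major_def by auto
    show ?thesis
    proof (rule ccontr)
      assume "\<not> 3 \<le> card ?N"
      moreover have "card ?N \<noteq> 0" using fin nem by simp
      ultimately have "card ?N = 1 \<or> card ?N = 2" by linarith
      then show False
      proof
        assume "card ?N = 1"
        then obtain x where x: "?N = {x}" by (rule card_1_singletonE)
        then have "x \<in> set H" using sub by auto
        then obtain t where t: "t < ?n" "x = H!t" by (metis in_set_conv_nth)
        have "?N \<subseteq> three_path H t" using x t unfolding three_path_def by simp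
        then have "minor E H u" unfolding minor_def using u nem t by blast
        then show False using nmin by simp
      next
        assume "card ?N = 2"
        then obtain x y where xy: "?N = {x,y}" "x \<noteq> y" by (meson card_2_iff)
        show False
        proof (cases "E x y")
          case False
          then show False using theta_two[OF g h u xy] nt by simp
        next
          case True
          have "x \<in> set H" "y \<in> set H" using sub xy by auto
          then obtain s t where st: "s < ?n" "x = H!s" "t < ?n" "y = H!t" by (metis in_set_conv_nth)
          have "t = Suc s mod ?n \<or> s = Suc t mod ?n" using h st True unfolding is_hole_def by simp
          then have "?N \<subseteq> three_path H s \<or> ?N \<subseteq> three_path H t"
            using st xy unfolding three_path_def by auto
          then have "minor E H u" unfolding minor_def using u nem st by blast
          then show False using nmin by simp
        qed
      qed
    qed
  qed
qed

lemma drop_path: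
  assumes h: "is_hole V E C" "0 < k" "k < length C"
  shows "is_path V E (drop k C) (C!k) (C!(length C - 1))"
proof -
  let ?n = "length C"
  define D where "D = rotate k C"
  have hD: "is_hole V E D" unfolding D_def by (rule hole_rotate[OF h(1)])
  have Cne: "C \<noteq> []" using h by auto
  have "D = drop k C @ take k C" unfolding D_def using h by (simp add: rotate_drop_take)
  then have tD: "take (?n - k) D = drop k C" by simp
  have lD: "length D = ?n" unfolding D_def by simp
  have D0: "D!0 = C!k" unfolding D_def using h Cne by (simp add: nth_rotate)
  have Dl: "D!(?n - k - 1) = C!(?n - 1)" unfolding D_def using h Cne by (simp add: nth_rotate)
  show ?thesis using hole_take_path[OF hD, of "?n - k"] h lD D0 Dl tD by simp
qed

lemma turtle_split:
  assumes g: "graph V E" and h: "is_hole V E C" and uv: "u \<in> V" "v \<in> V" "u \<notin> set C" "v \<notin> set C" "E u v"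
    and k: "0 < k" "k < length C"
    and cu: "card {w \<in> set C. E u w} \<ge> 3" and cv: "card {w \<in> set C. E v w} \<ge> 3"
    and au: "\<forall>t<length C. E u (C!t) \<longrightarrow> t < k" and av: "\<forall>t<length C. E v (C!t) \<longrightarrow> k \<le> t"
  shows "has_turtle V E"
proof -
  let ?n = "length C"
  define P1 where "P1 = take k C"
  define P2 where "P2 = rev (drop k C)"
  have dC: "distinct C" and n4: "?n \<ge> 4" using h unfolding is_hole_def by auto
  have pP1: "is_path V E P1 (C!0) (C!(k-1))" unfolding P1_def by (rule hole_take_path[OF h k])
  have pP2: "is_path V E P2 (C!(?n - 1)) (C!k)" unfolding P2_def by (rule path_rev[OF drop_path[OF h k]])
  have disj: "set P1 \<inter> set P2 = {}" unfolding P1_def P2_def using dC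
    by (simp add: set_take_disj_set_drop_if_distinct)
  have un: "set P1 \<union> set P2 = set C" unfolding P1_def P2_def
    using set_append[of "take k C" "drop k C"] by simp
  have adj: "\<And>i j. i < ?n \<Longrightarrow> j < ?n \<Longrightarrow> E (C!i) (C!j) = (j = Suc i mod ?n \<or> i = Suc j mod ?n)"
    using h unfolding is_hole_def by simp
  have Cne: "C \<noteq> []" using n4 by auto
  have e1: "E (C!0) (C!(?n - 1))" using adj[of 0 "?n - 1"] n4 Cne by simp
  have e2: "E (C!(k-1)) (C!k)" using adj[of "k-1" k] k by simp
  have ih: "induces_hole V E (set P1 \<union> set P2)" unfolding induces_hole_def un using h by blast
  have inP1: "\<And>t. t < k \<Longrightarrow> C!t \<in> set P1" unfolding P1_def using k
    by (metis in_set_conv_nth length_take min.absorb4 nth_take)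
  have inP2: "\<exists>t. k \<le> t \<and> t < ?n \<and> w = C!t" if w: "w \<in> set P2" for w
  proof -
    obtain i where i: "i < ?n - k" "w = drop k C ! i" using w unfolding P2_def by (auto simp: in_set_conv_nth)
    show ?thesis using i k by (intro exI[of _ "k+i"]) auto
  qed
  have inP2': "C!t \<in> set P2" if t: "k \<le> t" "t < ?n" for t
  proof -
    have "drop k C ! (t - k) = C!t" "t - k < length (drop k C)" using t k by auto
    then show ?thesis unfolding P2_def by (metis nth_mem set_rev)
  qed
  have inP1': "\<And>w. w \<in> set P1 \<Longrightarrow> \<exists>t. t < k \<and> w = C!t" unfolding P1_def using k
    by (auto simp: in_set_conv_nth)
  have su: "{w \<in> set P1. E u w} = {w \<in> set C. E u w}"
  proof
    show "{w \<in> set P1. E u w} \<subseteq> {w \<in> set C. E u w}" using un by auto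
    show "{w \<in> set C. E u w} \<subseteq> {w \<in> set P1. E u w}"
    proof
      fix w assume "w \<in> {w \<in> set C. E u w}"
      then obtain t where "t < ?n" "w = C!t" "E u w" by (auto simp: in_set_conv_nth)
      then show "w \<in> {w \<in> set P1. E u w}" using au inP1 by auto
    qed
  qed
  have sv: "{w \<in> set P2. E v w} = {w \<in> set C. E v w}"
  proof
    show "{w \<in> set P2. E v w} \<subseteq> {w \<in> set C. E v w}" using un by auto
    show "{w \<in> set C. E v w} \<subseteq> {w \<in> set P2. E v w}"
    proof
      fix w assume "w \<in> {w \<in> set C. E v w}"
      then obtain t where "t < ?n" "w = C!t" "E v w" by (auto simp: in_set_conv_nth)
      then show "w \<in> {w \<in> set P2. E v w}" using av inP2' by auto
    qed
  qed
  have nu: "\<forall>w \<in> set P2. \<not> E u w" using inP2 au by fastforce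
  have nv: "\<forall>w \<in> set P1. \<not> E v w"
  proof (intro ballI notI)
    fix w assume w: "w \<in> set P1" "E v w"
    obtain t where t: "t < k" "w = C!t" using inP1'[OF w(1)] by blast
    have "t < ?n" using t k by simp
    then have "k \<le> t" using av w t by auto
    then show False using t by simp
  qed
  show ?thesis unfolding has_turtle_def
  proof (intro exI conjI)
    show "is_path V E P1 (C!0) (C!(k-1))" by (fact pP1)
    show "is_path V E P2 (C!(?n - 1)) (C!k)" by (fact pP2)
    show "set P1 \<inter> set P2 = {}" by (fact disj)
    show "E (C!0) (C!(?n - 1))" "E (C!(k-1)) (C!k)" by (fact e1 e2)+
    show "induces_hole V E (set P1 \<union> set P2)" by (fact ih)
    show "u \<in> V" "v \<in> V" "E u v" by (fact uv)+
    show "u \<notin> set P1 \<union> set P2" "v \<notin> set P1 \<union> set P2" using uv un by auto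
    show "3 \<le> card {w \<in> set P1. E u w}" using su cu by simp
    show "3 \<le> card {w \<in> set P2. E v w}" using sv cv by simp
    show "\<forall>w \<in> set P2. \<not> E u w" by (fact nu)
    show "\<forall>w \<in> set P1. \<not> E v w" by (fact nv)
  qed
qed



lemma rot1_nth: assumes "C \<noteq> []" "t < length C"
  shows "rotate 1 C ! t = (if t = length C - 1 then C!0 else C!(Suc t))"
proof -
  have e: "rotate 1 C ! t = C!((1+t) mod length C)" using nth_rotate[OF assms(2), of 1] .
  show ?thesis unfolding e using assms by (auto simp: mod_if)
qed

theorem lemma2p5:
  fixes V :: "'a set" and E :: "'a \<Rightarrow> 'a \<Rightarrow> bool" and H :: "'a list" and u v :: 'a
  assumes "graph V E"
    and "in_class_C V E"
    and "is_hole V E H"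
    and "u \<in> V - set H" and "v \<in> V - set H"
    and "major E H u \<or> is_clone E H u"
    and "major E H v \<or> is_clone E H v"
    and "nested E H u v"
    and "E u v"
  shows "\<exists>w \<in> set H. E u w \<and> E v w"
proof (rule ccontr)
  assume nc: "\<not> (\<exists>w \<in> set H. E u w \<and> E v w)"
  note g = assms(1) and h = assms(3)
  have nt: "\<not> has_theta V E" and ntu: "\<not> has_turtle V E" using assms(2) unfolding in_class_C_def by auto
  let ?n = "length H"
  have n4: "?n \<ge> 4" and dH: "distinct H" using h unfolding is_hole_def by auto
  have Hne: "H \<noteq> []" using n4 by auto
  have uV: "u \<in> V" "u \<notin> set H" and vV: "v \<in> V" "v \<notin> set H" using assms(4,5) by auto
  have cu: "card (nbrs_H E H u) \<ge> 3" by (rule card3[OF g nt h uV assms(6)])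
  have cv: "card (nbrs_H E H v) \<ge> 3" by (rule card3[OF g nt h vV assms(7)])
  obtain i j where ij: "i < ?n" "j < ?n" "i \<noteq> j" and su: "nbrs_H E H u \<subseteq> arc H i j"
    and sv: "nbrs_H E H v \<subseteq> arc H j i" using assms(8) unfolding nested_def by blast
  define C where "C = rotate i H"
  have hC: "is_hole V E C" unfolding C_def by (rule hole_rotate[OF h])
  have lC: "length C = ?n" and sC: "set C = set H" unfolding C_def by auto
  have Cne: "C \<noteq> []" using lC n4 Hne by auto
  have Cnth: "C!t = H!((t+i) mod ?n)" if "t < ?n" for t unfolding C_def using that Hne by (simp add: nth_rotate add.commute)
  have CinH: "C!t \<in> set H" if "t < ?n" for t using that lC sC by (metis nth_mem)
  define d where "d = (j + ?n - i) mod ?n"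
  have d: "1 \<le> d" "d < ?n" unfolding d_def using d_ar[OF ij] by auto
  have FA: "t \<le> d" if t: "t < ?n" "E u (C!t)" for t
  proof -
    have "C!t \<in> nbrs_H E H u" unfolding nbrs_H_def using t CinH by auto
    then have "H!((t+i) mod ?n) \<in> arc H i j" using su Cnth t by auto
    then obtain k where k: "H!((t+i) mod ?n) = H!((i+k) mod ?n)" "k \<le> (j + ?n - i) mod ?n"
      unfolding arc_def by auto
    have "(t+i) mod ?n = (i+k) mod ?n" using k(1) dH Hne by (simp add: nth_eq_iff_index_eq)
    then show ?thesis unfolding d_def using FA_ar[OF t(1) ij(1,2) k(2)] by simp
  qed
  have FB: "d \<le> t \<or> t = 0" if t: "t < ?n" "E v (C!t)" for t
  proof -
    have "C!t \<in> nbrs_H E H v" unfolding nbrs_H_def using t CinH by auto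
    then have "H!((t+i) mod ?n) \<in> arc H j i" using sv Cnth t by auto
    then obtain k where k: "H!((t+i) mod ?n) = H!((j+k) mod ?n)" "k \<le> (i + ?n - j) mod ?n"
      unfolding arc_def by auto
    have "(t+i) mod ?n = (j+k) mod ?n" using k(1) dH Hne by (simp add: nth_eq_iff_index_eq)
    then show ?thesis unfolding d_def using FB_ar[OF t(1) ij k(2)] by simp
  qed
  have noC: "\<not> (E u (C!t) \<and> E v (C!t))" if "t < ?n" for t using nc CinH[OF that] by auto
  have NU: "{w \<in> set C. E u w} = nbrs_H E H u" "{w \<in> set C. E v w} = nbrs_H E H v"
    unfolding nbrs_H_def sC by auto
  have cuC: "card {w \<in> set C. E u w} \<ge> 3" "card {w \<in> set C. E v w} \<ge> 3" using NU cu cv by auto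
  obtain tu where tu: "tu < ?n" "E u (C!tu)"
  proof -
    have "nbrs_H E H u \<noteq> {}" using cu by auto
    then obtain w where "w \<in> set C" "E u w" using NU by auto
    then show ?thesis using that lC by (metis in_set_conv_nth)
  qed
  obtain tv where tv: "tv < ?n" "E v (C!tv)"
  proof -
    have "nbrs_H E H v \<noteq> {}" using cv by auto
    then obtain w where "w \<in> set C" "E v w" using NU by auto
    then show ?thesis using that lC by (metis in_set_conv_nth)
  qed
  define C1 where "C1 = rotate 1 C"
  have hC1: "is_hole V E C1" unfolding C1_def by (rule hole_rotate[OF hC])
  have lC1: "length C1 = ?n" and sC1: "set C1 = set C" unfolding C1_def using lC by auto
  have C1nth: "C1!t = (if t = ?n - 1 then C!0 else C!(Suc t))" if "t < ?n" for t
    unfolding C1_def using rot1_nth[OF Cne, of t] that lC by simp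
  have uC: "u \<notin> set C" "v \<notin> set C" using uV vV sC by auto
  have uC1: "u \<notin> set C1" "v \<notin> set C1" using uC sC1 by auto
  have cuC1: "card {w \<in> set C1. E u w} \<ge> 3" "card {w \<in> set C1. E v w} \<ge> 3" using cuC sC1 by auto
  show False
  proof (cases "E u (C!d)")
    case False
    note nd = False
    show False
    proof (cases "E v (C!0)")
      case False
      have "has_turtle V E"
      proof (rule turtle_split[OF g hC uV(1) vV(1) uC assms(9)])
        show "0 < d" "d < length C" using d lC by auto
        show "3 \<le> card {w \<in> set C. E u w}" "3 \<le> card {w \<in> set C. E v w}" by (fact cuC)+
        show "\<forall>t<length C. E u (C ! t) \<longrightarrow> t < d"
        proof (intro allI impI)
          fix t assume t: "t < length C" "E u (C ! t)"
          have "t \<le> d" using FA[of t] t lC by simp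
          moreover have "t \<noteq> d" using nd t by auto
          ultimately show "t < d" by simp
        qed
        show "\<forall>t<length C. E v (C ! t) \<longrightarrow> d \<le> t"
        proof (intro allI impI)
          fix t assume t: "t < length C" "E v (C ! t)"
          have "d \<le> t \<or> t = 0" using FB[of t] t lC by simp
          moreover have "t \<noteq> 0" using False t by metis
          ultimately show "d \<le> t" by simp
        qed
      qed
      then show False using ntu by simp
    next
      case True
      have "tu \<noteq> 0" using noC[of 0] True tu Hne by (metis gr0I)
      moreover have "tu \<noteq> d" using tu nd by auto
      ultimately have tu1: "1 \<le> tu" "tu < d" using FA[OF tu] by auto
      have "has_turtle V E"
      proof (rule turtle_split[OF g hC1 uV(1) vV(1) uC1 assms(9)])
        show "0 < d - 1" "d - 1 < length C1" using d lC1 tu1 by auto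
        show "3 \<le> card {w \<in> set C1. E u w}" "3 \<le> card {w \<in> set C1. E v w}" by (fact cuC1)+
        show "\<forall>t<length C1. E u (C1 ! t) \<longrightarrow> t < d - 1"
        proof (intro allI impI)
          fix t assume t: "t < length C1" "E u (C1 ! t)"
          show "t < d - 1"
          proof (cases "t = ?n - 1")
            case True then show ?thesis using t C1nth lC1 noC[of 0] \<open>E v (C!0)\<close> n4 Hne by auto
          next
            case False
            then have "E u (C!(Suc t))" "Suc t < ?n" using t C1nth lC1 by auto
            then have "Suc t \<le> d" "Suc t \<noteq> d" using FA[of "Suc t"] nd by auto
            then show ?thesis by simp
          qed
        qed
        show "\<forall>t<length C1. E v (C1 ! t) \<longrightarrow> d - 1 \<le> t"
        proof (intro allI impI)
          fix t assume t: "t < length C1" "E v (C1 ! t)"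
          show "d - 1 \<le> t"
          proof (cases "t = ?n - 1")
            case True then show ?thesis using d by auto
          next
            case False
            then have "E v (C!(Suc t))" "Suc t < ?n" using t C1nth lC1 by auto
            then show ?thesis using FB[of "Suc t"] by auto
          qed
        qed
      qed
      then show False using ntu by simp
    qed
  next
    case True
    note ed = True
    show False
    proof (cases "E v (C!0)")
      case False
      have "tv \<noteq> d" using noC[of d] ed tv d by auto
      moreover have "tv \<noteq> 0" using False tv by metis
      ultimately have tv1: "d + 1 \<le> tv" using FB[OF tv] by simp
      have "has_turtle V E"
      proof (rule turtle_split[OF g hC uV(1) vV(1) uC assms(9)])
        show "0 < d + 1" "d + 1 < length C" using tv1 tv lC by auto
        show "3 \<le> card {w \<in> set C. E u w}" "3 \<le> card {w \<in> set C. E v w}" by (fact cuC)+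
        show "\<forall>t<length C. E u (C ! t) \<longrightarrow> t < d + 1"
        proof (intro allI impI)
          fix t assume t: "t < length C" "E u (C ! t)"
          have "t \<le> d" using FA[of t] t lC by simp
          then show "t < d + 1" by simp
        qed
        show "\<forall>t<length C. E v (C ! t) \<longrightarrow> d + 1 \<le> t"
        proof (intro allI impI)
          fix t assume t: "t < length C" "E v (C ! t)"
          have "t \<noteq> d" using noC[of d] ed t d by auto
          moreover have "t \<noteq> 0" using False t by metis
          ultimately show "d + 1 \<le> t" using FB[of t] t lC by auto
        qed
      qed
      then show False using ntu by simp
    next
      case True
      have "has_turtle V E"
      proof (rule turtle_split[OF g hC1 uV(1) vV(1) uC1 assms(9)])
        show "0 < d" "d < length C1" using d lC1 by auto
        show "3 \<le> card {w \<in> set C1. E u w}" "3 \<le> card {w \<in> set C1. E v w}" by (fact cuC1)+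
        show "\<forall>t<length C1. E u (C1 ! t) \<longrightarrow> t < d"
        proof (intro allI impI)
          fix t assume t: "t < length C1" "E u (C1 ! t)"
          show "t < d"
          proof (cases "t = ?n - 1")
            case True then show ?thesis using t C1nth lC1 noC[of 0] \<open>E v (C!0)\<close> n4 Hne by auto
          next
            case False
            then have "E u (C!(Suc t))" "Suc t < ?n" using t C1nth lC1 by auto
            then show ?thesis using FA[of "Suc t"] by auto
          qed
        qed
        show "\<forall>t<length C1. E v (C1 ! t) \<longrightarrow> d \<le> t"
        proof (intro allI impI)
          fix t assume t: "t < length C1" "E v (C1 ! t)"
          show "d \<le> t"
          proof (cases "t = ?n - 1")
            case True then show ?thesis using d by auto
          next
            case False
            then have "E v (C!(Suc t))" "Suc t < ?n" using t C1nth lC1 by auto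
            moreover have "Suc t \<noteq> d" using noC[of d] ed d calculation by auto
            ultimately show ?thesis using FB[of "Suc t"] by auto
          qed
        qed
      qed
      then show False using ntu by simp
    qed
  qed
qed

end
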